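(* Let $P$ be a well-ordered phaser and suppose $P\to Q$. Then $Q$ is well-ordered.
   Context: A view is a record $v=(\mathrm{sp}(v),\mathrm{wp}(v),\mathrm{mode}(v))$ with $\mathrm{sp}(v),\mathrm{wp}(v)\in\mathbb{N}$ and $\mathrm{mode}(v)\in\{\mathtt{SW},\mathtt{SO},\mathtt{WO}\}$. For a view or mode, $\mathrm{CanSignal}$ means the mode is $\mathtt{SW}$ or $\mathtt{SO}$, and $\mathrm{CanWait}$ means the mode is $\mathtt{SW}$ or $\mathtt{WO}$. A phaser (state) $P$ is a finite partial map from task identifiers to views; $t\in P$ means $t\in\mathrm{dom}\,P$. For views, $v_1\unrhd v_2$ (cannot-happen-before) iff $\mathrm{mode}(v_1)=\mathtt{WO}$ or $\mathrm{sp}(v_1)\ge\mathrm{wp}(v_2)$ or $\mathrm{mode}(v_2)=\mathtt{SO}$. For phasers, $P\unrhd Q$ iff $P(t)\unrhd Q(t')$ for all $t\in\mathrm{dom}\,P$, $t'\in\mathrm{dom}\,Q$. $P$ is well-ordered iff $P\unrhd P$. Reduction $P\to_t^{o}Q$ (task $t$ performs operation $o$) is defined by four rules. Signal: if $P(t)=v$, $\mathrm{CanSignal}(v)$, and ($\mathrm{mode}(v)=\mathtt{SW}\Rightarrow\mathrm{wp}(v)=\mathrm{sp}(v)$), then $Q=P[t\mapsto v']$ where $v'$ is $v$ with $\mathrm{sp}$ increased by 1. Wait: if $P(t)=v$, $\mathrm{CanWait}(v)$, ($\mathrm{mode}(v)=\mathtt{SW}\Rightarrow\mathrm{wp}(v)+1=\mathrm{sp}(v)$),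 and $\mathrm{Sync}(P,t)$, meaning that for every $t'\in\mathrm{dom}\,P$ with $\mathrm{CanSignal}(P(t'))$ we have $\mathrm{sp}(P(t'))>\mathrm{wp}(v)$, then $Q=P[t\mapsto v']$ where $v'$ is $v$ with $\mathrm{wp}$ increased by 1. Register$(t',r)$ with $r$ a mode: if $t'\notin\mathrm{dom}\,P$, $P(t)=v$, ($\mathrm{CanWait}(r)\Rightarrow\mathrm{CanWait}(v)$) and ($\mathrm{CanSignal}(r)\Rightarrow\mathrm{CanSignal}(v)$), then $Q=P[t'\mapsto(\mathrm{sp}(v),\mathrm{wp}(v),r)]$. Drop: if $t\in\mathrm{dom}\,P$, then $Q$ is $P$ with $t$ removed from its domain. $P\to Q$ means $P\to_t^{o}Q$ for some $t,o$. *)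

theory Defs
  imports Main
begin

datatype mode = SW | SO | WO

record view =
  sp :: nat
  wp :: nat
  mode :: mode

definition CanSignalM :: "mode \<Rightarrow> bool" where
  "CanSignalM r \<longleftrightarrow> r = SW \<or> r = SO"
definition CanWaitM :: "mode \<Rightarrow> bool" where
  "CanWaitM r \<longleftrightarrow> r = SW \<or> r = WO"
definition CanSignal :: "view \<Rightarrow> bool" where
  "CanSignal v \<longleftrightarrow> CanSignalM (mode v)"
definition CanWait :: "view \<Rightarrow> bool" where
  "CanWait v \<longleftrightarrow> CanWaitM (mode v)"

type_synonym 't phaser = "'t \<rightharpoonup> view"

definition view_chb :: "view \<Rightarrow> view \<Rightarrow> bool" (infix "\<unrhd>\<^sub>v" 50) where
  "v1 \<unrhd>\<^sub>v v2 \<longleftrightarrow> mode v1 = WO \<or> sp v1 \<ge> wp v2 \<or> mode v2 = SO"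

definition phaser_chb :: "'t phaser \<Rightarrow> 't phaser \<Rightarrow> bool" where
  "phaser_chb P Q \<longleftrightarrow> (\<forall>t v t' v'. P t = Some v \<longrightarrow> Q t' = Some v' \<longrightarrow> v \<unrhd>\<^sub>v v')"

definition well_ordered :: "'t phaser \<Rightarrow> bool" where
  "well_ordered P \<longleftrightarrow> phaser_chb P P"

datatype 't op = Signal | Wait | Register 't mode | Drop

definition Sync :: "'t phaser \<Rightarrow> 't \<Rightarrow> bool" where
  "Sync P t \<longleftrightarrow> (\<forall>t' v' v. P t = Some v \<longrightarrow> P t' = Some v' \<longrightarrow> CanSignal v' \<longrightarrow> sp v' > wp v)"

inductive reduce :: "'t phaser \<Rightarrow> 't \<Rightarrow> 't op \<Rightarrow> 't phaser \<Rightarrow> bool" where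
  signal: "\<lbrakk> P t = Some v; CanSignal v; mode v = SW \<longrightarrow> wp v = sp v \<rbrakk>
     \<Longrightarrow> reduce P t Signal (P(t \<mapsto> v\<lparr>sp := Suc (sp v)\<rparr>))"
| wait: "\<lbrakk> P t = Some v; CanWait v; mode v = SW \<longrightarrow> wp v + 1 = sp v; Sync P t \<rbrakk>
     \<Longrightarrow> reduce P t Wait (P(t \<mapsto> v\<lparr>wp := Suc (wp v)\<rparr>))"
| register: "\<lbrakk> t' \<notin> dom P; P t = Some v; CanWaitM r \<longrightarrow> CanWait v; CanSignalM r \<longrightarrow> CanSignal v \<rbrakk>
     \<Longrightarrow> reduce P t (Register t' r) (P(t' \<mapsto> \<lparr>sp = sp v, wp = wp v, mode = r\<rparr>))"
| drop: "t \<in> dom P \<Longrightarrow> reduce P t Drop (P(t := None))"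

definition reduces :: "'t phaser \<Rightarrow> 't phaser \<Rightarrow> bool" where
  "reduces P Q \<longleftrightarrow> (\<exists>t o'. reduce P t o' Q)"

end

theory Submission
  imports Defs
begin

theorem lemma2:
  fixes P Q :: "'t phaser"
  assumes "finite (dom P)"
    and "well_ordered P"
    and "reduces P Q"
  shows "well_ordered Q"
proof -
  obtain t o' where r: "reduce P t o' Q" using assms(3) unfolding reduces_def by blast
  have W: "\<And>a x b y. P a = Some x \<Longrightarrow> P b = Some y \<Longrightarrow> x \<unrhd>\<^sub>v y"
    using assms(2) unfolding well_ordered_def phaser_chb_def by blast
  from r show ?thesis
  proof cases
    case (signal v)
    show ?thesis unfolding well_ordered_def phaser_chb_def
    proof (intro allI impI)
      fix a x b y assume a: "Q a = Some x" and b: "Q b = Some y"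
      show "x \<unrhd>\<^sub>v y"
        using a b signal
        by (cases "a = t"; cases "b = t"; auto dest: W simp: view_chb_def CanSignal_def CanSignalM_def split: if_splits)
    qed
  next
    case (wait v)
    show ?thesis unfolding well_ordered_def phaser_chb_def
    proof (intro allI impI)
      fix a x b y assume a: "Q a = Some x" and b: "Q b = Some y"
      have S: "\<And>c u. P c = Some u \<Longrightarrow> CanSignal u \<Longrightarrow> sp u > wp v"
        using wait unfolding Sync_def by blast
      show "x \<unrhd>\<^sub>v y"
        using a b wait S[of a]
        by (cases "a = t"; cases "b = t"; cases "mode x"; cases "mode y"; cases "mode v")
           (auto dest: W simp: view_chb_def CanSignal_def CanSignalM_def CanWait_def CanWaitM_def split: if_splits)
    qed
  next
    case (register t2 v rr)
    show ?thesis unfolding well_ordered_def phaser_chb_def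
    proof (intro allI impI)
      fix a x b y assume a: "Q a = Some x" and b: "Q b = Some y"
      show "x \<unrhd>\<^sub>v y"
        using a b register W[OF register(4) register(4)]
        by (cases "a = t2"; cases "b = t2"; cases "mode x"; cases "mode y"; cases "mode v"; cases rr)
           (auto dest: W simp: view_chb_def CanSignal_def CanSignalM_def CanWait_def CanWaitM_def split: if_splits)
    qed
  next
    case drop
    then show ?thesis using assms(2)
      unfolding well_ordered_def phaser_chb_def by (auto split: if_splits)
  qed
qed

end
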